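(* Let $\mathcal T$ be a closed triangulated surface and let $(\mathcal G,\mathcal D,\{\mathcal D_1,\ldots,\mathcal D_n\})$ be a decomposition of $\mathcal T$. Then the main disc $\mathcal D$ satisfies $T(\mathcal D)\geq \mathrm{mv}(\mathcal T)$ and $V(\mathcal D)\geq \mathrm{mv}(\mathcal T)+1$, where $T(\cdot)$ and $V(\cdot)$ denote the number of triangles and of vertices.
   Context: A triangulated surface is a finite simplicial complex whose underlying space is a connected compact surface; it is closed if the surface has empty boundary. The valence of a vertex is the number of triangles containing it, and $\mathrm{mv}(\mathcal T)$ is the maximal valence of a vertex of $\mathcal T$. A decomposition of a closed triangulated surface $\mathcal T$ is a triple $(\mathcal G,\mathcal D,\{\mathcal D_1,\ldots,\mathcal D_n\})$ with $n\geq 0$ such that: $\mathcal G,\mathcal D,\mathcal D_1,\ldots,\mathcal D_n$ are sub-triangulations (subcomplexes which are triangulated surfaces) of $\mathcal T$; $\mathcal D,\mathcal D_1,\ldots,\mathcal D_n$ are triangulated discs; the interior of $\mathcal D$ contains a vertex of maximal valence in $\mathcal T$; $\mathcal G\cup\mathcal D\cup\mathcal D_1\cup\cdots\cup\mathcal D_n=\mathcal T$; and the intersection of any two of these sub-triangulations is either a triangulated circle or empty. $\mathcal G$ is called the genus-surface and $\mathcal D$ the main disc. *)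

theory Defs
  imports Main
begin

definition simplicial_complex :: "'v set set \<Rightarrow> bool" where
  "simplicial_complex K \<longleftrightarrow> finite K \<and> (\<forall>s\<in>K. finite s \<and> s \<noteq> {}) \<and>
     (\<forall>s\<in>K. \<forall>t. t \<subseteq> s \<and> t \<noteq> {} \<longrightarrow> t \<in> K)"

definition vertices :: "'v set set \<Rightarrow> 'v set" where
  "vertices K = {v. {v} \<in> K}"

definition edges :: "'v set set \<Rightarrow> 'v set set" where
  "edges K = {s\<in>K. card s = 2}"

definition triangles :: "'v set set \<Rightarrow> 'v set set" where
  "triangles K = {s\<in>K. card s = 3}"

definition cx_connected :: "'v set set \<Rightarrow> bool" where
  "cx_connected K \<longleftrightarrow> (\<forall>u\<in>vertices K. \<forall>w\<in>vertices K.
      (u, w) \<in> {(a, b). {a, b} \<in> edges K}\<^sup>*)"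

definition degree :: "'v set set \<Rightarrow> 'v \<Rightarrow> nat" where
  "degree K v = card {e\<in>edges K. v \<in> e}"

definition tri_circle :: "'v set set \<Rightarrow> bool" where
  "tri_circle C \<longleftrightarrow> simplicial_complex C \<and> (\<forall>s\<in>C. card s \<le> 2) \<and>
     card (vertices C) \<ge> 3 \<and> cx_connected C \<and> (\<forall>v\<in>vertices C. degree C v = 2)"

text \<open>Triangulated arc: a path graph with at least one edge.\<close>
definition tri_arc :: "'v set set \<Rightarrow> bool" where
  "tri_arc C \<longleftrightarrow> simplicial_complex C \<and> (\<forall>s\<in>C. card s \<le> 2) \<and>
     edges C \<noteq> {} \<and> cx_connected C \<and> (\<forall>v\<in>vertices C. degree C v \<le> 2) \<and>
     card (edges C) + 1 = card (vertices C)"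

definition link :: "'v set set \<Rightarrow> 'v \<Rightarrow> 'v set set" where
  "link K v = {s - {v} | s. s \<in> K \<and> v \<in> s \<and> s \<noteq> {v}}"

definition tri_surface :: "'v set set \<Rightarrow> bool" where
  "tri_surface K \<longleftrightarrow> simplicial_complex K \<and> K \<noteq> {} \<and> (\<forall>s\<in>K. card s \<le> 3) \<and>
     (\<forall>s\<in>K. \<exists>t\<in>triangles K. s \<subseteq> t) \<and> cx_connected K \<and>
     (\<forall>v\<in>vertices K. tri_circle (link K v) \<or> tri_arc (link K v))"

definition interior_vertex :: "'v set set \<Rightarrow> 'v \<Rightarrow> bool" where
  "interior_vertex K v \<longleftrightarrow> v \<in> vertices K \<and> tri_circle (link K v)"

definition closed_surface :: "'v set set \<Rightarrow> bool" where
  "closed_surface K \<longleftrightarrow> tri_surface K \<and> (\<forall>v\<in>vertices K. interior_vertex K v)"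

definition euler_char :: "'v set set \<Rightarrow> int" where
  "euler_char K = int (card (vertices K)) - int (card (edges K)) + int (card (triangles K))"

text \<open>Triangulated disc: a triangulated surface with nonempty boundary and Euler
  characteristic 1 (by the classification of compact surfaces this is exactly a disc).\<close>
definition tri_disc :: "'v set set \<Rightarrow> bool" where
  "tri_disc K \<longleftrightarrow> tri_surface K \<and> (\<exists>v\<in>vertices K. \<not> interior_vertex K v) \<and> euler_char K = 1"

definition valence :: "'v set set \<Rightarrow> 'v \<Rightarrow> nat" where
  "valence K v = card {t\<in>triangles K. v \<in> t}"

definition mv :: "'v set set \<Rightarrow> nat" where
  "mv K = Max (valence K ` vertices K)"

definition sub_triangulation :: "'v set set \<Rightarrow> 'v set set \<Rightarrow> bool" where
  "sub_triangulation S K \<longleftrightarrow> S \<subseteq> K \<and> tri_surface S"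

definition decomposition :: "'v set set \<Rightarrow> 'v set set \<Rightarrow> 'v set set \<Rightarrow> 'v set set list \<Rightarrow> bool" where
  "decomposition T G D Ds \<longleftrightarrow>
     (\<forall>P\<in>set (G # D # Ds). sub_triangulation P T) \<and>
     (\<forall>P\<in>set (D # Ds). tri_disc P) \<and>
     (\<exists>v. interior_vertex D v \<and> valence T v = mv T) \<and>
     G \<union> D \<union> \<Union>(set Ds) = T \<and>
     (let Ps = G # D # Ds in \<forall>i j. i < j \<and> j < length Ps \<longrightarrow>
         tri_circle (Ps ! i \<inter> Ps ! j) \<or> Ps ! i \<inter> Ps ! j = {})"

end

theory Submission
  imports Defs
begin

lemma circ_local:
  assumes C: "tri_circle C" and C': "tri_circle C'" and sub: "C' \<subseteq> C"
    and a: "a \<in> vertices C'"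
  shows "{e\<in>edges C. a\<in>e} \<subseteq> C'"
proof -
  have aC: "a \<in> vertices C" using a sub by (auto simp: vertices_def)
  have fin: "finite C" using C by (simp add: tri_circle_def simplicial_complex_def)
  have s: "{e\<in>edges C'. a\<in>e} \<subseteq> {e\<in>edges C. a\<in>e}" using sub by (auto simp: edges_def)
  have c1: "card {e\<in>edges C'. a\<in>e} = 2" using C' a by (simp add: tri_circle_def degree_def)
  have c2: "card {e\<in>edges C. a\<in>e} = 2" using C aC by (simp add: tri_circle_def degree_def)
  have "finite {e\<in>edges C. a\<in>e}" using fin by (simp add: edges_def)
  then have "{e\<in>edges C'. a\<in>e} = {e\<in>edges C. a\<in>e}"
    using card_subset_eq[OF _ s] c1 c2 by simp
  then show ?thesis by (auto simp: edges_def)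
qed

lemma circ_sub:
  assumes C: "tri_circle C" and C': "tri_circle C'" and sub: "C' \<subseteq> C"
  shows "edges C \<subseteq> C'"
proof -
  have scC: "simplicial_complex C" and scC': "simplicial_complex C'"
    using C C' by (auto simp: tri_circle_def)
  have "card (vertices C') \<ge> 3" using C' by (simp add: tri_circle_def)
  then have "vertices C' \<noteq> {}" by auto
  then obtain w0 where w0: "w0 \<in> vertices C'" by auto
  have w0C: "w0 \<in> vertices C" using w0 sub by (auto simp: vertices_def)
  have conn: "cx_connected C" using C by (simp add: tri_circle_def)
  have allv: "u \<in> vertices C'" if u: "u \<in> vertices C" for u
  proof -
    have "(w0, u) \<in> {(a, b). {a, b} \<in> edges C}\<^sup>*" using conn w0C u by (simp add: cx_connected_def)
    then show ?thesis
    proof (induction rule: rtrancl_induct)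
      case base then show ?case using w0 .
    next
      case (step a b)
      have "{a,b} \<in> {e\<in>edges C. a\<in>e}" using step(2) by simp
      then have ab: "{a,b} \<in> C'" using circ_local[OF C C' sub step(3)] by blast
      have "{b} \<subseteq> {a,b}" "{b} \<noteq> {}" by auto
      then have "{b} \<in> C'" using scC' ab unfolding simplicial_complex_def by blast
      then show ?case by (simp add: vertices_def)
    qed
  qed
  show ?thesis
  proof
    fix e assume e: "e \<in> edges C"
    then have "card e = 2" "e \<in> C" by (auto simp: edges_def)
    then obtain a b where ab: "e = {a,b}" by (meson card_2_iff)
    have "{a} \<subseteq> e" "{a} \<noteq> {}" using ab by auto
    then have "{a} \<in> C" using \<open>e \<in> C\<close> scC unfolding simplicial_complex_def by blast
    then have "a \<in> vertices C'" using allv by (simp add: vertices_def)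
    moreover have "e \<in> {e\<in>edges C. a\<in>e}" using e ab by simp
    ultimately show "e \<in> C'" using circ_local[OF C C' sub] by blast
  qed
qed

lemma circ_card:
  assumes C: "tri_circle C"
  shows "card (edges C) = card (vertices C)"
proof -
  have scC: "simplicial_complex C" using C by (auto simp: tri_circle_def)
  have fin: "finite C" using scC by (simp add: simplicial_complex_def)
  have fE: "finite (edges C)" using fin by (simp add: edges_def)
  have fV: "finite (vertices C)"
  proof -
    have "vertices C \<subseteq> \<Union>C" by (auto simp: vertices_def)
    moreover have "finite (\<Union>C)" using scC by (auto simp: simplicial_complex_def)
    ultimately show ?thesis by (rule finite_subset)
  qed
  have ev: "e \<subseteq> vertices C" if "e \<in> edges C" for e
  proof
    fix x assume "x \<in> e"
    then have "{x} \<subseteq> e" by auto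
    then show "x \<in> vertices C" using that scC unfolding simplicial_complex_def vertices_def edges_def by blast
  qed
  have "(\<Sum>u\<in>vertices C. degree C u) = (\<Sum>u\<in>vertices C. 2::nat)"
    using C by (simp add: tri_circle_def)
  also have "\<dots> = 2 * card (vertices C)" by simp
  finally have A: "(\<Sum>u\<in>vertices C. degree C u) = 2 * card (vertices C)" .
  have "(\<Sum>u\<in>vertices C. degree C u) = (\<Sum>u\<in>vertices C. \<Sum>e\<in>edges C. if u \<in> e then 1 else (0::nat))"
    by (simp add: degree_def sum.If_cases fE Int_def conj_commute)
  also have "\<dots> = (\<Sum>e\<in>edges C. \<Sum>u\<in>vertices C. if u \<in> e then 1 else (0::nat))"
    by (rule sum.swap)
  also have "\<dots> = (\<Sum>e\<in>edges C. card e)"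
  proof (rule sum.cong)
    fix e assume "e \<in> edges C"
    then have "vertices C \<inter> e = e" using ev by auto
    then show "(\<Sum>u\<in>vertices C. if u \<in> e then 1 else (0::nat)) = card e"
      by (simp add: sum.If_cases fV)
  qed simp
  also have "\<dots> = (\<Sum>e\<in>edges C. 2)" by (rule sum.cong) (auto simp: edges_def)
  finally show ?thesis using A by simp
qed

theorem mainTheorem2:
  fixes T G D :: "'v set set" and Ds :: "'v set set list"
  assumes "closed_surface T"
    and "decomposition T G D Ds"
  shows "card (triangles D) \<ge> mv T \<and> card (vertices D) \<ge> mv T + 1"
proof -
  obtain v where iv: "interior_vertex D v" and vm: "valence T v = mv T"
    using assms(2) by (auto simp: decomposition_def)
  have DT: "D \<subseteq> T" and sD: "tri_surface D"
    using assms(2) by (auto simp: decomposition_def sub_triangulation_def)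
  have scD: "simplicial_complex D" using sD by (simp add: tri_surface_def)
  have finD: "finite D" using scD by (simp add: simplicial_complex_def)
  have vD: "v \<in> vertices D" and cD: "tri_circle (link D v)" using iv by (auto simp: interior_vertex_def)
  have vT: "v \<in> vertices T" using vD DT by (auto simp: vertices_def)
  have cT: "tri_circle (link T v)" using assms(1) vT by (auto simp: closed_surface_def interior_vertex_def)
  have lsub: "link D v \<subseteq> link T v" using DT by (auto simp: link_def)
  have esub: "edges (link T v) \<subseteq> link D v" by (rule circ_sub[OF cT cD lsub])
  have trieq: "{t\<in>triangles D. v \<in> t} = {t\<in>triangles T. v \<in> t}"
  proof
    show "{t\<in>triangles D. v \<in> t} \<subseteq> {t\<in>triangles T. v \<in> t}" using DT by (auto simp: triangles_def)
  next
    show "{t\<in>triangles T. v \<in> t} \<subseteq> {t\<in>triangles D. v \<in> t}"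
    proof
      fix t assume t: "t \<in> {t\<in>triangles T. v \<in> t}"
      then have tT: "t \<in> T" and c3: "card t = 3" and vt: "v \<in> t" by (auto simp: triangles_def)
      have ft: "finite t" using c3 card.infinite by fastforce
      have c2: "card (t - {v}) = 2" using c3 vt ft by simp
      then have "t - {v} \<noteq> {}" by (metis card.empty zero_neq_numeral)
      then have "t \<noteq> {v}" by auto
      then have "t - {v} \<in> link T v" using tT vt by (auto simp: link_def)
      then have "t - {v} \<in> edges (link T v)" using c2 by (simp add: edges_def)
      then have "t - {v} \<in> link D v" using esub by auto
      then obtain s where s: "s \<in> D" "v \<in> s" "s - {v} = t - {v}" by (auto simp: link_def)
      then have "s = t" using vt by blast
      then show "t \<in> {t\<in>triangles D. v \<in> t}" using s c3 vt by (simp add: triangles_def)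
    qed
  qed
  have valD: "card {t\<in>triangles D. v \<in> t} = mv T" using trieq vm by (simp add: valence_def)
  have finTD: "finite (triangles D)" using finD by (simp add: triangles_def)
  have A: "card (triangles D) \<ge> mv T"
    using valD card_mono[OF finTD, of "{t\<in>triangles D. v \<in> t}"] by auto
  have bij: "bij_betw (\<lambda>t. t - {v}) {t\<in>triangles D. v \<in> t} (edges (link D v))"
  proof (rule bij_betw_imageI)
    show "inj_on (\<lambda>t. t - {v}) {t\<in>triangles D. v \<in> t}"
      by (rule inj_onI) blast
    show "(\<lambda>t. t - {v}) ` {t\<in>triangles D. v \<in> t} = edges (link D v)"
    proof
      show "(\<lambda>t. t - {v}) ` {t\<in>triangles D. v \<in> t} \<subseteq> edges (link D v)"
      proof
        fix e assume "e \<in> (\<lambda>t. t - {v}) ` {t\<in>triangles D. v \<in> t}"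
        then obtain t where t: "t \<in> D" "card t = 3" "v \<in> t" "e = t - {v}" by (auto simp: triangles_def)
        have ft: "finite t" using t(2) card.infinite by fastforce
        have "card e = 2" using t ft by simp
        moreover then have "t \<noteq> {v}" using t by (metis Diff_cancel card.empty zero_neq_numeral)
        ultimately show "e \<in> edges (link D v)" using t by (auto simp: edges_def link_def)
      qed
    next
      show "edges (link D v) \<subseteq> (\<lambda>t. t - {v}) ` {t\<in>triangles D. v \<in> t}"
      proof
        fix e assume "e \<in> edges (link D v)"
        then have "e \<in> link D v" "card e = 2" by (auto simp: edges_def)
        then obtain s where s: "s \<in> D" "v \<in> s" "e = s - {v}" "card e = 2" unfolding link_def by blast
        have fs: "finite s" using s(1) scD by (simp add: simplicial_complex_def)
        have "card s = Suc (card (s - {v}))" using s(2) fs by (metis card_Suc_Diff1 fs s(2))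
        then have "card s = 3" using s by simp
        then show "e \<in> (\<lambda>t. t - {v}) ` {t\<in>triangles D. v \<in> t}" using s by (auto simp: triangles_def)
      qed
    qed
  qed
  have ce: "card (edges (link D v)) = mv T" using bij_betw_same_card[OF bij] valD by simp
  have cv: "card (vertices (link D v)) = mv T" using circ_card[OF cD] ce by simp
  have vsub: "vertices (link D v) \<subseteq> vertices D - {v}"
  proof
    fix w assume "w \<in> vertices (link D v)"
    then obtain s where s: "s \<in> D" "v \<in> s" "s - {v} = {w}" by (auto simp: vertices_def link_def)
    then have "{w} \<subseteq> s" "w \<noteq> v" by auto
    then have "{w} \<in> D" using s scD unfolding simplicial_complex_def by blast
    then show "w \<in> vertices D - {v}" using \<open>w \<noteq> v\<close> by (simp add: vertices_def)
  qed
  have fVD: "finite (vertices D)"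
  proof -
    have "vertices D \<subseteq> \<Union>D" by (auto simp: vertices_def)
    moreover have "finite (\<Union>D)" using scD by (auto simp: simplicial_complex_def)
    ultimately show ?thesis by (rule finite_subset)
  qed
  have "mv T \<le> card (vertices D - {v})" using card_mono[OF _ vsub] fVD cv by simp
  also have "\<dots> = card (vertices D) - 1" using vD fVD by simp
  finally have B0: "mv T \<le> card (vertices D) - 1" .
  have "card (vertices D) > 0" using vD fVD card_gt_0_iff by blast
  then have B: "mv T + 1 \<le> card (vertices D)" using B0 by linarith
  show ?thesis using A B by simp
qed

end
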